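(* There exists an Opt-Lyapunov function for $(X^{\rm in},T)$ if and only if there exist a function $W:\mathbb R^d\to[0,+\infty]$ and a function $\rho:[0,+\infty]\to[0,+\infty]$ such that: (i) $\sup_{x\in X^{\rm in}}W(x)$ is finite and strictly positive; (ii) $W(T(x))\le\rho(W(x))$ for all $x\in\mathbb R^d$; (iii) $\rho(x)=0\iff x=0$ and $\rho(x)=+\infty\iff x=+\infty$; (iv) the restriction of $\rho$ to $\mathbb R_+$ belongs to $\mathcal K$; (v) $\rho(x)<x$ for all $x\in(0,+\infty)$.
   Context: $X^{\rm in}\subseteq\mathbb R^d$, $T:\mathbb R^d\to\mathbb R^d$. $\mathcal K$: continuous strictly increasing $\alpha:\mathbb R_+\to\mathbb R_+$ with $\alpha(0)=0$. An Opt-Lyapunov function for $(X^{\rm in},T)$ is a function $V:\mathbb R^d\to[0,+\infty]$ such that $\sup_{x\in X^{\rm in}}V(x)\in(0,1]$ and there exists $\lambda\in(0,1)$ with $V(T(x))\le\lambda V(x)$ for all $x\in\mathbb R^d$ (convention $\lambda\cdot(+\infty)=+\infty$). *)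

theory Defs
  imports "HOL-Analysis.Analysis" "HOL-Library.Extended_Nonnegative_Real"
begin

definition classK :: "(real \<Rightarrow> real) \<Rightarrow> bool" where
  "classK \<alpha> \<longleftrightarrow> continuous_on {0..} \<alpha> \<and> strict_mono_on {0..} \<alpha> \<and> \<alpha> 0 = 0
     \<and> (\<forall>x\<ge>0. \<alpha> x \<ge> 0)"

text \<open>Opt-Lyapunov function for (Xin, T); values in [0,+oo] are modelled by ennreal,
  and lambda * oo = oo for lambda > 0 holds in ennreal.\<close>

definition is_opt_lyapunov :: "('d \<Rightarrow> ennreal) \<Rightarrow> 'd set \<Rightarrow> ('d \<Rightarrow> 'd) \<Rightarrow> bool" where
  "is_opt_lyapunov V Xin T \<longleftrightarrow>
     (SUP x\<in>Xin. V x) \<in> {0<..1} \<and>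
     (\<exists>l::real. 0 < l \<and> l < 1 \<and> (\<forall>x. V (T x) \<le> ennreal l * V x))"

end

theory Submission
  imports Defs
begin

lemma fwd:
  fixes V :: "'a \<Rightarrow> ennreal"
  assumes "is_opt_lyapunov V Xin T"
  shows "\<exists>(W :: 'a \<Rightarrow> ennreal) (\<rho> :: ennreal \<Rightarrow> ennreal).
        (SUP x\<in>Xin. W x) \<noteq> \<infinity> \<and> (SUP x\<in>Xin. W x) > 0 \<and>
        (\<forall>x. W (T x) \<le> \<rho> (W x)) \<and>
        (\<forall>y. \<rho> y = 0 \<longleftrightarrow> y = 0) \<and>
        (\<forall>y. \<rho> y = \<infinity> \<longleftrightarrow> y = \<infinity>) \<and>
        classK (\<lambda>t. enn2real (\<rho> (ennreal t))) \<and>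
        (\<forall>y. 0 < y \<and> y < \<infinity> \<longrightarrow> \<rho> y < y)"
proof -
  from assms obtain l where l: "0 < l" "l < 1" "\<forall>x. V (T x) \<le> ennreal l * V x"
    and S: "(SUP x\<in>Xin. V x) \<in> {0<..1}"
    unfolding is_opt_lyapunov_def by blast
  have eq: "\<And>t. t \<in> {0..} \<Longrightarrow> enn2real (ennreal l * ennreal t) = l * t"
    using l by (simp add: ennreal_mult''[symmetric])
  have cK: "classK (\<lambda>t. enn2real (ennreal l * ennreal t))"
    unfolding classK_def
  proof (intro conjI)
    show "continuous_on {0..} (\<lambda>t. enn2real (ennreal l * ennreal t))"
      by (rule continuous_on_cong[THEN iffD2, OF refl _ continuous_on_mult_left[OF continuous_on_id]])
         (use eq in auto)
    show "strict_mono_on {0..} (\<lambda>t. enn2real (ennreal l * ennreal t))"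
      unfolding strict_mono_on_def using eq l by auto
    show "enn2real (ennreal l * ennreal 0) = 0" by simp
    show "\<forall>x\<ge>0. 0 \<le> enn2real (ennreal l * ennreal x)" by simp
  qed
  have lt: "\<forall>y. 0 < y \<and> y < \<infinity> \<longrightarrow> ennreal l * y < y"
  proof (intro allI impI)
    fix y :: ennreal assume y: "0 < y \<and> y < \<infinity>"
    then obtain r where r: "y = ennreal r" "r > 0"
      by (metis ennreal_cases ennreal_less_zero_iff less_irrefl top.extremum_strict)
    have "l * r < r" using l r by simp
    then show "ennreal l * y < y" using l r by (simp add: ennreal_mult''[symmetric] ennreal_less_iff)
  qed
  have fin: "(SUP x\<in>Xin. V x) \<noteq> \<infinity>" using S
  proof -
    have "(SUP x\<in>Xin. V x) \<le> 1" using S by simp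
    also have "(1::ennreal) < \<infinity>" by simp
    finally show ?thesis by (rule less_imp_neq)
  qed
  show ?thesis
    apply (rule exI[of _ V], rule exI[of _ "\<lambda>y. ennreal l * y"])
    using S fin l cK lt by (auto simp: ennreal_mult_eq_top_iff top_unique)
qed

lemma bwd:
  fixes W :: "'a \<Rightarrow> ennreal" and \<rho> :: "ennreal \<Rightarrow> ennreal"
  assumes fin: "(SUP x\<in>Xin. W x) \<noteq> \<infinity>" and pos: "(SUP x\<in>Xin. W x) > 0"
    and step: "\<forall>x. W (T x) \<le> \<rho> (W x)"
    and z: "\<forall>y. \<rho> y = 0 \<longleftrightarrow> y = 0"
    and inf: "\<forall>y. \<rho> y = \<infinity> \<longleftrightarrow> y = \<infinity>"
    and K: "classK (\<lambda>t. enn2real (\<rho> (ennreal t)))"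
    and lt: "\<forall>y. 0 < y \<and> y < \<infinity> \<longrightarrow> \<rho> y < y"
  shows "\<exists>V. is_opt_lyapunov V Xin T"
proof -
  define M where "M = (SUP x\<in>Xin. W x)"
  define c where "c = \<rho> M"
  define U where "U = (\<lambda>y. if c < W y then (1::ennreal) else 0)"
  define V where "V = (\<lambda>x. SUP n. (2::ennreal)^n * U ((T^^n) x))"
  have smo: "strict_mono_on {0..} (\<lambda>t. enn2real (\<rho> (ennreal t)))"
    using K unfolding classK_def by blast
  have mono: "\<rho> a \<le> \<rho> b" if ab: "a \<le> b" and bt: "b < \<infinity>" for a b
  proof -
    have at: "a < \<infinity>" using ab bt by (rule order.strict_trans1)
    obtain ra where ra: "a = ennreal ra" "ra \<ge> 0" using at
      by (cases a) auto
    obtain rb where rb: "b = ennreal rb" "rb \<ge> 0" using bt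
      by (cases b) auto
    have rab: "ra \<le> rb" using ab ra rb by simp
    have fa: "\<rho> a \<noteq> \<infinity>" using inf at by auto
    have fb: "\<rho> b \<noteq> \<infinity>" using inf bt by auto
    have "enn2real (\<rho> (ennreal ra)) \<le> enn2real (\<rho> (ennreal rb))"
      using strict_mono_on_leD[OF smo] ra rb rab by auto
    then have "enn2real (\<rho> a) \<le> enn2real (\<rho> b)" using ra rb by simp
    then have "ennreal (enn2real (\<rho> a)) \<le> ennreal (enn2real (\<rho> b))" by (rule ennreal_leI)
    then show ?thesis using fa fb unfolding ennreal_enn2real_if by (auto split: if_splits)
  qed
  have le: "\<rho> y \<le> y" for y
  proof (cases "y = 0")
    case True then show ?thesis using z by simp
  next
    case False
    show ?thesis
    proof (cases "y = \<infinity>")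
      case True then show ?thesis by simp
    next
      case False
      have "0 < y" using \<open>y \<noteq> 0\<close> by (simp add: zero_less_iff_neq_zero)
      moreover have "y < \<infinity>" using False by (simp add: top.not_eq_extremum)
      ultimately have "\<rho> y < y" using lt by blast
      then show ?thesis by (rule less_imp_le)
    qed
  qed
  have Mt: "M < \<infinity>" using fin unfolding M_def infinity_ennreal_def less_top[symmetric] .
  have orb: "W ((T^^Suc n) x) \<le> c" if x: "x \<in> Xin" for x n
  proof (induction n)
    case 0
    have "W x \<le> M" unfolding M_def using x by (rule SUP_upper)
    then have "\<rho> (W x) \<le> c" unfolding c_def using mono Mt by blast
    then show ?case using step by (auto intro: order.trans)
  next
    case (Suc n)
    have "W ((T^^Suc (Suc n)) x) \<le> \<rho> (W ((T^^Suc n) x))" using step by simp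
    also have "\<dots> \<le> W ((T^^Suc n) x)" by (rule le)
    finally show ?case using Suc by (rule order.trans)
  qed
  have VU: "V x = U x" if x: "x \<in> Xin" for x
  proof (rule antisym)
    show "V x \<le> U x" unfolding V_def
    proof (rule SUP_least)
      fix n :: nat
      show "2^n * U ((T^^n) x) \<le> U x"
      proof (cases n)
        case 0 then show ?thesis by simp
      next
        case (Suc m)
        then have "U ((T^^n) x) = 0" using orb[OF x, of m] unfolding U_def by auto
        then show ?thesis by simp
      qed
    qed
    show "U x \<le> V x" unfolding V_def
      using SUP_upper[of 0 UNIV "\<lambda>n. (2::ennreal)^n * U ((T^^n) x)"] by simp
  qed
  have cM: "c < M" unfolding c_def using lt pos Mt unfolding M_def by blast
  then obtain x0 where x0: "x0 \<in> Xin" "c < W x0" unfolding M_def by (auto simp: less_SUP_iff)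
  have S: "(SUP x\<in>Xin. V x) = 1"
  proof (rule antisym)
    show "(SUP x\<in>Xin. V x) \<le> 1"
      by (rule SUP_least) (auto simp: VU U_def)
    have "1 = V x0" using VU[OF x0(1)] x0 unfolding U_def by simp
    also have "\<dots> \<le> (SUP x\<in>Xin. V x)" using x0(1) by (rule SUP_upper)
    finally show "1 \<le> (SUP x\<in>Xin. V x)" .
  qed
  have half: "ennreal (1/2) * (2^Suc n * u) = 2^n * u" for n and u :: ennreal
  proof -
    have "ennreal (1/2) * 2 = 1"
    proof -
      have "ennreal (1/2) * ennreal 2 = ennreal (1/2 * 2)" by (rule ennreal_mult''[symmetric]) simp
      then show ?thesis by simp
    qed
    then show ?thesis by (simp only: power_Suc mult.assoc[symmetric] mult_1)
  qed
  have lyap: "V (T x) \<le> ennreal (1/2) * V x" for x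
    unfolding V_def
  proof (rule SUP_least)
    fix n :: nat
    have "2^n * U ((T^^n) (T x)) = ennreal (1/2) * (2^Suc n * U ((T^^Suc n) x))"
      by (simp only: half funpow_Suc_right comp_apply)
    also have "\<dots> \<le> ennreal (1/2) * (SUP n. (2::ennreal)^n * U ((T^^n) x))"
      by (intro mult_left_mono SUP_upper) auto
    finally show "2^n * U ((T^^n) (T x)) \<le> ennreal (1/2) * (SUP n. (2::ennreal)^n * U ((T^^n) x))" .
  qed
  show ?thesis unfolding is_opt_lyapunov_def
    by (rule exI[of _ V]) (use S lyap in \<open>auto intro!: exI[of _ "1/2"]\<close>)
qed

theorem mainTheorem15:
  fixes Xin :: "(real ^ 'd) set" and T :: "real ^ 'd \<Rightarrow> real ^ 'd"
  shows "(\<exists>V. is_opt_lyapunov V Xin T) \<longleftrightarrow>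
    (\<exists>(W :: real ^ 'd \<Rightarrow> ennreal) (\<rho> :: ennreal \<Rightarrow> ennreal).
        (SUP x\<in>Xin. W x) \<noteq> \<infinity> \<and> (SUP x\<in>Xin. W x) > 0 \<and>
        (\<forall>x. W (T x) \<le> \<rho> (W x)) \<and>
        (\<forall>y. \<rho> y = 0 \<longleftrightarrow> y = 0) \<and>
        (\<forall>y. \<rho> y = \<infinity> \<longleftrightarrow> y = \<infinity>) \<and>
        classK (\<lambda>t. enn2real (\<rho> (ennreal t))) \<and>
        (\<forall>y. 0 < y \<and> y < \<infinity> \<longrightarrow> \<rho> y < y))"
proof
  assume "\<exists>V. is_opt_lyapunov V Xin T"
  then obtain V where "is_opt_lyapunov V Xin T" by blast
  then show "\<exists>(W :: real ^ 'd \<Rightarrow> ennreal) (\<rho> :: ennreal \<Rightarrow> ennreal).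
        (SUP x\<in>Xin. W x) \<noteq> \<infinity> \<and> (SUP x\<in>Xin. W x) > 0 \<and>
        (\<forall>x. W (T x) \<le> \<rho> (W x)) \<and>
        (\<forall>y. \<rho> y = 0 \<longleftrightarrow> y = 0) \<and>
        (\<forall>y. \<rho> y = \<infinity> \<longleftrightarrow> y = \<infinity>) \<and>
        classK (\<lambda>t. enn2real (\<rho> (ennreal t))) \<and>
        (\<forall>y. 0 < y \<and> y < \<infinity> \<longrightarrow> \<rho> y < y)" by (rule fwd)
next
  assume "\<exists>(W :: real ^ 'd \<Rightarrow> ennreal) (\<rho> :: ennreal \<Rightarrow> ennreal).
        (SUP x\<in>Xin. W x) \<noteq> \<infinity> \<and> (SUP x\<in>Xin. W x) > 0 \<and>
        (\<forall>x. W (T x) \<le> \<rho> (W x)) \<and>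
        (\<forall>y. \<rho> y = 0 \<longleftrightarrow> y = 0) \<and>
        (\<forall>y. \<rho> y = \<infinity> \<longleftrightarrow> y = \<infinity>) \<and>
        classK (\<lambda>t. enn2real (\<rho> (ennreal t))) \<and>
        (\<forall>y. 0 < y \<and> y < \<infinity> \<longrightarrow> \<rho> y < y)"
  then show "\<exists>V. is_opt_lyapunov V Xin T" by (elim exE conjE) (rule bwd; assumption)
qed

end
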